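(* The axiom system $EL_{int}$ is complete with respect to the class of all topo-models: for every formula $\varphi\in\mathcal{L}_{EL_{int}}$, if $\varphi$ is valid in every topo-model, then $\varphi$ is a theorem of $EL_{int}$.
   Context: Fix a countable set $\mathit{Prop}$ of propositional variables and a finite non-empty set $\mathcal{A}$ of agents. The language $\mathcal{L}_{EL_{int}}$ is given by $\varphi ::= p \mid \neg\varphi \mid \varphi\wedge\varphi \mid K_i\varphi \mid \mathrm{int}(\varphi)$ with $p\in\mathit{Prop}$, $i\in\mathcal{A}$; $\vee,\rightarrow,\leftrightarrow$ are the usual abbreviations, $\bot := p\wedge\neg p$, $\hat K_i\varphi:=\neg K_i\neg\varphi$. Topo-models: Let $(X,\tau)$ be a topological space and write $\mathrm{Int}(A)$ for the topological interior of $A\subseteq X$. A neighbourhood function set $\Phi$ on $(X,\tau)$ is a set of partial functions $\theta$ from $X$ to the set of functions $\mathcal{A}\to\tau$ such that for all $x,y\in Dom(\theta)$, all $i\in\mathcal{A}$ and all $U\in\tau$: (1) $\theta(x)(i)\in\tau$; (2) $x\in\theta(x)(i)$; (3) $\theta(x)(i)\subseteq Dom(\theta)$; (4) if $y\in\theta(x)(i)$ then $\theta(x)(i)=\theta(y)(i)$; (5) $\theta|_U\in\Phi$, where $\theta|_U$ is the partial function with $Dom(\theta|_U)=Dom(\theta)\cap U$ and $\theta|_U(x)(i)=\theta(x)(i)\cap U$. A topo-model is $\mathcal{M}=(X,\tau,\Phi,V)$ with $(X,\tau)$ a topological space, $\Phi$ a neighbourhood function set on it, and $V$ assigning to each $p\in\mathit{Prop}$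 a subset of $X$. A neighbourhood situation is a pair $(x,\theta)$ with $\theta\in\Phi$, $x\in Dom(\theta)$. Semantics: $(x,\theta)\models p$ iff $x\in V(p)$; Boolean clauses as usual; $(x,\theta)\models K_i\varphi$ iff $(y,\theta)\models\varphi$ for all $y\in\theta(x)(i)$; $(x,\theta)\models\mathrm{int}(\varphi)$ iff $x\in\mathrm{Int}([\![\varphi]\!]^\theta)$, where $[\![\varphi]\!]^\theta=\{y\in Dom(\theta)\mid (y,\theta)\models\varphi\}$. $\varphi$ is valid in $\mathcal{M}$ if it is true at every neighbourhood situation of $\mathcal{M}$. The axiom system $EL_{int}$ has axioms: all instances of propositional tautologies; $K_i(\varphi\to\psi)\to(K_i\varphi\to K_i\psi)$; $K_i\varphi\to\varphi$; $K_i\varphi\to K_iK_i\varphi$; $\neg K_i\varphi\to K_i\neg K_i\varphi$; $\mathrm{int}(\varphi\to\psi)\to(\mathrm{int}(\varphi)\to\mathrm{int}(\psi))$; $\mathrm{int}(\varphi)\to\varphi$; $\mathrm{int}(\varphi)\to\mathrm{int}(\mathrm{int}(\varphi))$; $K_i\varphi\to\mathrm{int}(\varphi)$; and rules: modus ponens, from $\varphi$ infer $K_i\varphi$, from $\varphi$ infer $\mathrm{int}(\varphi)$. Theorems are the members of the smallest set containing the axioms and closed under the rules. *)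

theory Defs
  imports "HOL-Analysis.Analysis"
begin

datatype ('p, 'i) fm =
    Atom 'p
  | Neg "('p, 'i) fm"
  | Conj "('p, 'i) fm" "('p, 'i) fm"
  | K 'i "('p, 'i) fm"
  | Intr "('p, 'i) fm"

definition Disj :: "('p, 'i) fm \<Rightarrow> ('p, 'i) fm \<Rightarrow> ('p, 'i) fm" where
  "Disj a b = Neg (Conj (Neg a) (Neg b))"

definition Imp :: "('p, 'i) fm \<Rightarrow> ('p, 'i) fm \<Rightarrow> ('p, 'i) fm" where
  "Imp a b = Neg (Conj a (Neg b))"

definition Iff :: "('p, 'i) fm \<Rightarrow> ('p, 'i) fm \<Rightarrow> ('p, 'i) fm" where
  "Iff a b = Conj (Imp a b) (Imp b a)"

primrec peval :: "(('p, 'i) fm \<Rightarrow> bool) \<Rightarrow> ('p, 'i) fm \<Rightarrow> bool" where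
  "peval g (Atom p) = g (Atom p)"
| "peval g (Neg a) = (\<not> peval g a)"
| "peval g (Conj a b) = (peval g a \<and> peval g b)"
| "peval g (K i a) = g (K i a)"
| "peval g (Intr a) = g (Intr a)"

definition tautology :: "('p, 'i) fm \<Rightarrow> bool" where
  "tautology a \<longleftrightarrow> (\<forall>g. peval g a)"

inductive derivable :: "('p, 'i) fm \<Rightarrow> bool" where
  Taut: "tautology a \<Longrightarrow> derivable a"
| K_K: "derivable (Imp (K i (Imp a b)) (Imp (K i a) (K i b)))"
| K_T: "derivable (Imp (K i a) a)"
| K_4: "derivable (Imp (K i a) (K i (K i a)))"
| K_5: "derivable (Imp (Neg (K i a)) (K i (Neg (K i a))))"
| Int_K: "derivable (Imp (Intr (Imp a b)) (Imp (Intr a) (Intr b)))"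
| Int_T: "derivable (Imp (Intr a) a)"
| Int_4: "derivable (Imp (Intr a) (Intr (Intr a)))"
| K_Int: "derivable (Imp (K i a) (Intr a))"
| MP: "derivable (Imp a b) \<Longrightarrow> derivable a \<Longrightarrow> derivable b"
| Nec_K: "derivable a \<Longrightarrow> derivable (K i a)"
| Nec_Int: "derivable a \<Longrightarrow> derivable (Intr a)"

text \<open>A partial function theta from X to functions (agents to open sets).\<close>
type_synonym ('w, 'i) nbf = "'w \<Rightarrow> ('i \<Rightarrow> 'w set) option"

definition nb :: "('w, 'i) nbf \<Rightarrow> 'w \<Rightarrow> 'i \<Rightarrow> 'w set" where
  "nb \<theta> x i = the (\<theta> x) i"

definition restr :: "('w, 'i) nbf \<Rightarrow> 'w set \<Rightarrow> ('w, 'i) nbf" where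
  "restr \<theta> U = (\<lambda>x. if x \<in> U then map_option (\<lambda>f i. f i \<inter> U) (\<theta> x) else None)"

definition nfs :: "'w topology \<Rightarrow> ('w, 'i) nbf set \<Rightarrow> bool" where
  "nfs T \<Phi> \<longleftrightarrow>
     (\<forall>\<theta>\<in>\<Phi>. dom \<theta> \<subseteq> topspace T \<and>
        (\<forall>x\<in>dom \<theta>. \<forall>i.
            openin T (nb \<theta> x i) \<and> x \<in> nb \<theta> x i \<and> nb \<theta> x i \<subseteq> dom \<theta> \<and>
            (\<forall>y\<in>dom \<theta>. y \<in> nb \<theta> x i \<longrightarrow> nb \<theta> x i = nb \<theta> y i)) \<and>
        (\<forall>U. openin T U \<longrightarrow> restr \<theta> U \<in> \<Phi>))"

definition topo_model :: "'w topology \<Rightarrow> ('w, 'i) nbf set \<Rightarrow> ('p \<Rightarrow> 'w set) \<Rightarrow> bool" where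
  "topo_model T \<Phi> V \<longleftrightarrow> nfs T \<Phi> \<and> (\<forall>p. V p \<subseteq> topspace T)"

primrec sat :: "'w topology \<Rightarrow> ('p \<Rightarrow> 'w set) \<Rightarrow> ('w, 'i) nbf \<Rightarrow> 'w \<Rightarrow> ('p, 'i) fm \<Rightarrow> bool" where
  "sat T V \<theta> x (Atom p) = (x \<in> V p)"
| "sat T V \<theta> x (Neg a) = (\<not> sat T V \<theta> x a)"
| "sat T V \<theta> x (Conj a b) = (sat T V \<theta> x a \<and> sat T V \<theta> x b)"
| "sat T V \<theta> x (K i a) = (\<forall>y\<in>nb \<theta> x i. sat T V \<theta> y a)"
| "sat T V \<theta> x (Intr a) = (x \<in> T interior_of {y \<in> dom \<theta>. sat T V \<theta> y a})"

definition valid_in :: "'w topology \<Rightarrow> ('w, 'i) nbf set \<Rightarrow> ('p \<Rightarrow> 'w set) \<Rightarrow> ('p, 'i) fm \<Rightarrow> bool" where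
  "valid_in T \<Phi> V a \<longleftrightarrow> (\<forall>\<theta>\<in>\<Phi>. \<forall>x\<in>dom \<theta>. sat T V \<theta> x a)"

end

theory Submission
  imports Defs "HOL-Library.Countable"
begin

instance fm :: (countable, countable) countable
  by countable_datatype

primrec imps :: "('p, 'i) fm list \<Rightarrow> ('p, 'i) fm \<Rightarrow> ('p, 'i) fm" where
  "imps [] b = b"
| "imps (a # L) b = Imp a (imps L b)"

definition bot :: "('p, 'i) fm" where
  "bot = Conj (Atom undefined) (Neg (Atom undefined))"

lemma peval_Imp[simp]: "peval g (Imp a b) = (peval g a \<longrightarrow> peval g b)"
  by (simp add: Imp_def)

lemma peval_bot[simp]: "peval g bot = False"
  by (simp add: bot_def)

lemma peval_imps[simp]: "peval g (imps L b) = ((\<forall>x\<in>set L. peval g x) \<longrightarrow> peval g b)"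
  by (induction L) auto

lemma taut1: "derivable A \<Longrightarrow> (\<And>g. peval g A \<Longrightarrow> peval g B) \<Longrightarrow> derivable B"
  by (rule MP[of A B]) (auto intro: Taut simp: tautology_def)

lemma taut0: "(\<And>g. peval g B) \<Longrightarrow> derivable B"
  by (auto intro: Taut simp: tautology_def)

lemma taut2: "derivable A \<Longrightarrow> derivable A' \<Longrightarrow> (\<And>g. peval g A \<Longrightarrow> peval g A' \<Longrightarrow> peval g C) \<Longrightarrow> derivable C"
proof -
  assume a: "derivable A" "derivable A'" and h: "\<And>g. peval g A \<Longrightarrow> peval g A' \<Longrightarrow> peval g C"
  have "derivable (Imp A (Imp A' C))" by (rule taut0) (auto intro: h)
  then have "derivable (Imp A' C)" using a MP by blast
  then show ?thesis using a MP by blast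
qed

definition consistent :: "('p, 'i) fm set \<Rightarrow> bool" where
  "consistent S \<longleftrightarrow> (\<forall>L. set L \<subseteq> S \<longrightarrow> \<not> derivable (imps L bot))"

definition MCS :: "('p, 'i) fm set \<Rightarrow> bool" where
  "MCS S \<longleftrightarrow> consistent S \<and> (\<forall>a. a \<in> S \<or> Neg a \<in> S)"

lemma consistent_sub: "consistent S \<Longrightarrow> T \<subseteq> S \<Longrightarrow> consistent T"
  unfolding consistent_def by blast

lemma consistent_ext:
  assumes "consistent S"
  shows "consistent (insert a S) \<or> consistent (insert (Neg a) S)"
proof (rule ccontr)
  assume "\<not> ?thesis"
  then obtain L1 L2 where l1: "set L1 \<subseteq> insert a S" "derivable (imps L1 bot)"
    and l2: "set L2 \<subseteq> insert (Neg a) S" "derivable (imps L2 bot)"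
    unfolding consistent_def by blast
  let ?L = "removeAll a L1 @ removeAll (Neg a) L2"
  have "set ?L \<subseteq> S" using l1 l2 by auto
  moreover have "derivable (imps ?L bot)"
  proof (rule taut2[OF l1(2) l2(2)])
    fix g assume h1: "peval g (imps L1 bot)" and h2: "peval g (imps L2 bot)"
    show "peval g (imps ?L bot)"
    proof (cases "peval g a")
      case True then show ?thesis using h1 by auto
    next
      case False then show ?thesis using h2 by auto
    qed
  qed
  ultimately show False using assms unfolding consistent_def by blast
qed

primrec lind :: "('p::countable, 'i::countable) fm set \<Rightarrow> nat \<Rightarrow> ('p, 'i) fm set" where
  "lind S 0 = S"
| "lind S (Suc n) = (if consistent (insert (from_nat n) (lind S n))
     then insert (from_nat n) (lind S n) else insert (Neg (from_nat n)) (lind S n))"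

lemma lind_cons: "consistent S \<Longrightarrow> consistent (lind S n)"
proof (induction n)
  case (Suc n)
  then have "consistent (lind S n)" by simp
  then show ?case using consistent_ext[of "lind S n" "from_nat n"] by auto
qed simp

lemma lind_mono: "m \<le> n \<Longrightarrow> lind S m \<subseteq> lind S n"
  by (induction n) (auto simp: le_Suc_eq)

lemma lind_fin: "set L \<subseteq> (\<Union>n. lind S n) \<Longrightarrow> \<exists>n. set L \<subseteq> lind S n"
proof (induction L)
  case Nil then show ?case by auto
next
  case (Cons x L)
  then obtain n m where "set L \<subseteq> lind S n" "x \<in> lind S m" by auto
  then show ?case using lind_mono[of n "max n m" S] lind_mono[of m "max n m" S]
    by (intro exI[of _ "max n m"]) auto
qed

lemma lindenbaum:
  assumes "consistent (S :: ('p::countable, 'i::countable) fm set)"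
  shows "\<exists>G. S \<subseteq> G \<and> MCS G"
proof (intro exI conjI)
  let ?G = "\<Union>n. lind S n"
  show "S \<subseteq> ?G" using lind.simps(1)[of S] by blast
  show "MCS ?G" unfolding MCS_def
  proof
    show "consistent ?G" unfolding consistent_def
    proof (intro allI impI)
      fix L assume "set L \<subseteq> ?G"
      then obtain n where "set L \<subseteq> lind S n" using lind_fin by blast
      then show "\<not> derivable (imps L bot)" using lind_cons[OF assms, of n]
        unfolding consistent_def by blast
    qed
    show "\<forall>a. a \<in> ?G \<or> Neg a \<in> ?G"
    proof
      fix a :: "('p,'i) fm"
      have "a \<in> lind S (Suc (to_nat a)) \<or> Neg a \<in> lind S (Suc (to_nat a))"
        by auto
      then show "a \<in> ?G \<or> Neg a \<in> ?G" by blast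
    qed
  qed
qed

lemma mcs_deriv: "MCS G \<Longrightarrow> set L \<subseteq> G \<Longrightarrow> derivable (imps L a) \<Longrightarrow> a \<in> G"
proof (rule ccontr)
  assume m: "MCS G" and L: "set L \<subseteq> G" and d: "derivable (imps L a)" and n: "a \<notin> G"
  then have "Neg a \<in> G" unfolding MCS_def by blast
  then have "set (Neg a # L) \<subseteq> G" using L by auto
  moreover have "derivable (imps (Neg a # L) bot)" by (rule taut1[OF d]) auto
  ultimately show False using m unfolding MCS_def consistent_def by blast
qed

lemma mcs_thm: "MCS G \<Longrightarrow> derivable a \<Longrightarrow> a \<in> G"
  using mcs_deriv[of G "[]" a] by simp

lemma mcs_imp: "MCS G \<Longrightarrow> derivable (Imp a b) \<Longrightarrow> a \<in> G \<Longrightarrow> b \<in> G"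
  using mcs_deriv[of G "[a]" b] by simp

lemma mcs_neg: "MCS G \<Longrightarrow> (Neg a \<in> G) = (a \<notin> G)"
proof
  assume m: "MCS G" and n: "Neg a \<in> G"
  show "a \<notin> G"
  proof
    assume "a \<in> G"
    then have "set [a, Neg a] \<subseteq> G" using n by auto
    moreover have "derivable (imps [a, Neg a] bot)" by (rule taut0) auto
    ultimately show False using m unfolding MCS_def consistent_def by blast
  qed
next
  assume "MCS G" "a \<notin> G" then show "Neg a \<in> G" unfolding MCS_def by blast
qed

lemma mcs_conj: "MCS G \<Longrightarrow> (Conj a b \<in> G) = (a \<in> G \<and> b \<in> G)"
proof
  assume m: "MCS G" and c: "Conj a b \<in> G"
  have "derivable (Imp (Conj a b) a)" "derivable (Imp (Conj a b) b)" by (rule taut0, simp)+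
  then show "a \<in> G \<and> b \<in> G" using mcs_imp[OF m] c by blast
next
  assume m: "MCS G" and c: "a \<in> G \<and> b \<in> G"
  have "derivable (imps [a, b] (Conj a b))" by (rule taut0) simp
  then show "Conj a b \<in> G" using mcs_deriv[OF m, of "[a,b]"] c by auto
qed

lemma box_imps:
  assumes nec: "\<And>a. derivable a \<Longrightarrow> derivable (B a)"
    and dist: "\<And>a b. derivable (Imp (B (Imp a b)) (Imp (B a) (B b)))"
  shows "derivable (imps P (B (imps L a))) \<Longrightarrow> derivable (imps (P @ map B L) (B a))"
proof (induction L arbitrary: P)
  case Nil then show ?case by simp
next
  case (Cons b L)
  have "derivable (imps (P @ [B b]) (B (imps L a)))"
    by (rule taut2[OF Cons.prems dist[of b "imps L a"]]) auto
  then show ?case using Cons.IH[of "P @ [B b]"] by simp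
qed

lemma existence:
  assumes nec: "\<And>a. derivable a \<Longrightarrow> derivable (B a)"
    and dist: "\<And>a b. derivable (Imp (B (Imp a b)) (Imp (B a) (B b)))"
    and m: "MCS G" and n: "B a \<notin> G"
  shows "consistent ({c. B c \<in> G} \<union> {Neg a})"
  unfolding consistent_def
proof (intro allI impI notI)
  fix L assume L: "set L \<subseteq> {c. B c \<in> G} \<union> {Neg a}" and d: "derivable (imps L bot)"
  let ?L = "removeAll (Neg a) L"
  have "derivable (imps ?L a)"
  proof (rule taut1[OF d])
    fix g assume h: "peval g (imps L bot)"
    show "peval g (imps ?L a)"
    proof (cases "peval g a")
      case False then show ?thesis using h by auto
    qed simp
  qed
  then have "derivable (B (imps ?L a))" by (rule nec)
  then have "derivable (imps ([] @ map B ?L) (B a))"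
    using box_imps[where B=B, OF nec dist, of "[]" ?L a] by simp
  moreover have "set (map B ?L) \<subseteq> G" using L by auto
  ultimately have "B a \<in> G" using mcs_deriv[OF m, of "map B ?L" "B a"] by simp
  then show False using n by simp
qed

definition Kset :: "'i \<Rightarrow> ('p, 'i) fm set \<Rightarrow> ('p, 'i) fm set" where
  "Kset i G = {a. K i a \<in> G}"

definition Iset :: "('p, 'i) fm set \<Rightarrow> ('p, 'i) fm set" where
  "Iset G = {a. Intr a \<in> G}"

lemma Kbox: "derivable a \<Longrightarrow> derivable (K i a)" "derivable (Imp (K i (Imp a b)) (Imp (K i a) (K i b)))"
  by (auto intro: derivable.intros)

lemma Ibox: "derivable a \<Longrightarrow> derivable (Intr a)" "derivable (Imp (Intr (Imp a b)) (Imp (Intr a) (Intr b)))"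
  by (auto intro: derivable.intros)

lemma Rint_Kequal:
  assumes g: "MCS G" and d: "MCS D" and s: "Iset G \<subseteq> Iset D"
  shows "Kset i G = Kset i D"
proof -
  have 1: "K i b \<in> D" if "K i b \<in> G" for b
  proof -
    have "K i (K i b) \<in> G" using mcs_imp[OF g K_4 that] .
    then have "Intr (K i b) \<in> G" by (rule mcs_imp[OF g K_Int])
    then have "Intr (K i b) \<in> D" using s unfolding Iset_def by auto
    then show ?thesis by (rule mcs_imp[OF d Int_T])
  qed
  have 2: "K i b \<notin> D" if "K i b \<notin> G" for b
  proof -
    have "Neg (K i b) \<in> G" using mcs_neg[OF g] that by simp
    then have "K i (Neg (K i b)) \<in> G" by (rule mcs_imp[OF g K_5])
    then have "Intr (Neg (K i b)) \<in> G" by (rule mcs_imp[OF g K_Int])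
    then have "Intr (Neg (K i b)) \<in> D" using s unfolding Iset_def by auto
    then have "Neg (K i b) \<in> D" by (rule mcs_imp[OF d Int_T])
    then show ?thesis using mcs_neg[OF d] by simp
  qed
  show ?thesis unfolding Kset_def using 1 2 by auto
qed

lemma K_truth:
  assumes g: "MCS (G :: ('p::countable, 'i::countable) fm set)"
  shows "(K i a \<in> G) = (\<forall>D. MCS D \<and> Kset i D = Kset i G \<longrightarrow> a \<in> D)"
proof
  assume k: "K i a \<in> G"
  show "\<forall>D. MCS D \<and> Kset i D = Kset i G \<longrightarrow> a \<in> D"
  proof (intro allI impI)
    fix D assume D: "MCS D \<and> Kset i D = Kset i G"
    then have "K i a \<in> D" using k unfolding Kset_def by auto
    then show "a \<in> D" using D mcs_imp[OF _ K_T] by auto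
  qed
next
  assume h: "\<forall>D. MCS D \<and> Kset i D = Kset i G \<longrightarrow> a \<in> D"
  show "K i a \<in> G"
  proof (rule ccontr)
    assume n: "K i a \<notin> G"
    define S where "S = {K i b | b. K i b \<in> G} \<union> {Neg (K i b) | b. K i b \<notin> G} \<union> {Neg a}"
    have sub: "S \<subseteq> {c. K i c \<in> G} \<union> {Neg a}"
    proof
      fix c assume "c \<in> S"
      then consider b where "c = K i b" "K i b \<in> G" | b where "c = Neg (K i b)" "K i b \<notin> G"
        | "c = Neg a" unfolding S_def by auto
      then show "c \<in> {c. K i c \<in> G} \<union> {Neg a}"
      proof cases
        case 1 then show ?thesis using mcs_imp[OF g K_4, of i b] by simp
      next
        case 2 then show ?thesis using mcs_imp[OF g K_5, of i b] mcs_neg[OF g, of "K i b"] by simp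
      qed simp
    qed
    have "consistent S" using consistent_sub[OF existence[where B="K i", OF Kbox(1) Kbox(2) g n] sub] .
    then obtain D where D: "S \<subseteq> D" "MCS D" using lindenbaum by blast
    have "Kset i D = Kset i G"
    proof -
      have "K i b \<in> D" if "K i b \<in> G" for b using D that unfolding S_def by auto
      moreover have "K i b \<notin> D" if "K i b \<notin> G" for b
      proof -
        have "Neg (K i b) \<in> D" using D that unfolding S_def by auto
        then show ?thesis using mcs_neg[OF D(2)] by simp
      qed
      ultimately show ?thesis unfolding Kset_def by auto
    qed
    moreover have "a \<notin> D"
    proof -
      have "Neg a \<in> D" using D unfolding S_def by auto
      then show ?thesis using mcs_neg[OF D(2)] by simp
    qed
    ultimately show False using h D(2) by auto
  qed
qed

lemma I_truth:
  assumes g: "MCS (G :: ('p::countable, 'i::countable) fm set)"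
  shows "(Intr a \<in> G) = (\<forall>D. MCS D \<and> Iset G \<subseteq> Iset D \<longrightarrow> a \<in> D)"
proof
  assume k: "Intr a \<in> G"
  show "\<forall>D. MCS D \<and> Iset G \<subseteq> Iset D \<longrightarrow> a \<in> D"
  proof (intro allI impI)
    fix D assume D: "MCS D \<and> Iset G \<subseteq> Iset D"
    then have "Intr a \<in> D" using k unfolding Iset_def by auto
    then show "a \<in> D" using D mcs_imp[OF _ Int_T] by auto
  qed
next
  assume h: "\<forall>D. MCS D \<and> Iset G \<subseteq> Iset D \<longrightarrow> a \<in> D"
  show "Intr a \<in> G"
  proof (rule ccontr)
    assume n: "Intr a \<notin> G"
    define S where "S = {Intr b | b. Intr b \<in> G} \<union> {Neg a}"
    have sub: "S \<subseteq> {c. Intr c \<in> G} \<union> {Neg a}"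
      unfolding S_def using mcs_imp[OF g Int_4] by auto
    have "consistent S" using consistent_sub[OF existence[where B="Intr", OF Ibox(1) Ibox(2) g n] sub] .
    then obtain D where D: "S \<subseteq> D" "MCS D" using lindenbaum by blast
    have "Iset G \<subseteq> Iset D" using D unfolding Iset_def S_def by auto
    moreover have "a \<notin> D"
    proof -
      have "Neg a \<in> D" using D unfolding S_def by auto
      then show ?thesis using mcs_neg[OF D(2)] by simp
    qed
    ultimately show False using h D(2) by auto
  qed
qed


definition W :: "('p::countable, 'i::countable) fm set set set" where
  "W = {{G} | G. MCS G}"

definition Rel :: "('p, 'i) fm set set \<Rightarrow> ('p, 'i) fm set set \<Rightarrow> bool" where
  "Rel w v \<longleftrightarrow> Iset (\<Union>w) \<subseteq> Iset (\<Union>v)"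

definition Topen :: "('p::countable, 'i::countable) fm set set set \<Rightarrow> bool" where
  "Topen U \<longleftrightarrow> U \<subseteq> W \<and> (\<forall>x\<in>U. \<forall>y\<in>W. Rel x y \<longrightarrow> y \<in> U)"

lemma istop: "istopology Topen"
  unfolding istopology_def Topen_def by blast

definition Tc :: "('p::countable, 'i::countable) fm set set topology" where
  "Tc = topology Topen"

lemma openin_Tc: "openin Tc = Topen"
  unfolding Tc_def by (rule topology_inverse'[OF istop])

lemma topspace_Tc: "topspace Tc = W"
  unfolding topspace_def openin_Tc Topen_def by auto

lemma W_MCS: "w \<in> W \<Longrightarrow> MCS (\<Union>w)"
  unfolding W_def by auto

lemma W_I: "MCS G \<Longrightarrow> {G} \<in> W"
  unfolding W_def by auto

definition cls :: "'i \<Rightarrow> ('p::countable, 'i::countable) fm set set \<Rightarrow> ('p, 'i) fm set set set" where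
  "cls i w = {v \<in> W. Kset i (\<Union>v) = Kset i (\<Union>w)}"

lemma cls_open: "Topen (cls i w)"
  unfolding Topen_def
proof (intro conjI ballI impI)
  show "cls i w \<subseteq> W" by (auto simp: cls_def)
  fix x y assume x: "x \<in> cls i w" and y: "y \<in> W" and r: "Rel x y"
  have "x \<in> W" using x by (simp add: cls_def)
  then have "Kset i (\<Union>x) = Kset i (\<Union>y)"
    using Rint_Kequal[OF W_MCS W_MCS[OF y]] r by (simp add: Rel_def)
  then show "y \<in> cls i w" using x y by (simp add: cls_def)
qed

definition th0 :: "(('p::countable, 'i::countable) fm set set, 'i) nbf" where
  "th0 w = (if w \<in> W then Some (\<lambda>i. cls i w) else None)"

definition Phi :: "(('p::countable, 'i::countable) fm set set, 'i) nbf set" where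
  "Phi = {restr th0 U | U. openin Tc U}"

definition Vc :: "'p \<Rightarrow> ('p::countable, 'i::countable) fm set set set" where
  "Vc p = {w \<in> W. Atom p \<in> \<Union>w}"

lemma restr_restr: "restr (restr th0 U) U' = restr th0 (U \<inter> U')"
  by (auto simp: restr_def fun_eq_iff option.map_comp comp_def Int_assoc)

lemma dom_restr: "dom (restr th0 U) = U \<inter> W"
  by (auto simp: restr_def th0_def dom_def)

lemma nb_restr: "x \<in> U \<Longrightarrow> x \<in> W \<Longrightarrow> nb (restr th0 U) x i = cls i x \<inter> U"
  by (simp add: restr_def th0_def nb_def)

lemma cls_self: "x \<in> W \<Longrightarrow> x \<in> cls i x"
  by (simp add: cls_def)

lemma cls_eq: "y \<in> cls i x \<Longrightarrow> cls i y = cls i x"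
  by (auto simp: cls_def)

lemma nfs_Phi: "nfs (Tc :: ('p::countable, 'i::countable) fm set set topology) Phi"
  unfolding nfs_def
proof
  fix \<theta> :: "(('p, 'i) fm set set, 'i) nbf" assume "\<theta> \<in> Phi"
  then obtain U where U: "\<theta> = restr th0 U" "openin Tc U" unfolding Phi_def by blast
  then have UW: "U \<subseteq> W" using openin_Tc Topen_def by metis
  have d: "dom \<theta> = U" using U UW dom_restr by auto
  show "dom \<theta> \<subseteq> topspace Tc \<and>
        (\<forall>x\<in>dom \<theta>. \<forall>i.
            openin Tc (nb \<theta> x i) \<and> x \<in> nb \<theta> x i \<and> nb \<theta> x i \<subseteq> dom \<theta> \<and>
            (\<forall>y\<in>dom \<theta>. y \<in> nb \<theta> x i \<longrightarrow> nb \<theta> x i = nb \<theta> y i)) \<and>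
        (\<forall>U. openin Tc U \<longrightarrow> restr \<theta> U \<in> Phi)"
  proof (intro conjI ballI allI impI)
    show "dom \<theta> \<subseteq> topspace Tc" using d UW topspace_Tc by auto
  next
    fix x i assume x: "x \<in> dom \<theta>"
    then have xs: "x \<in> U" "x \<in> W" using d UW by auto
    have nbx: "nb \<theta> x i = cls i x \<inter> U" using nb_restr[OF xs] U by simp
    show "openin Tc (nb \<theta> x i)" unfolding nbx
      using openin_Int[OF _ U(2)] cls_open openin_Tc by metis
    show "x \<in> nb \<theta> x i" using nbx xs cls_self by auto
    show "nb \<theta> x i \<subseteq> dom \<theta>" using nbx d by auto
    fix y assume "y \<in> dom \<theta>" "y \<in> nb \<theta> x i"
    then have "y \<in> U" "y \<in> W" "y \<in> cls i x" using d UW nbx by auto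
    then show "nb \<theta> x i = nb \<theta> y i" using nbx nb_restr[of y U i] U cls_eq[of y i x] by simp
  next
    fix U' :: "('p, 'i) fm set set set" assume "openin Tc U'"
    then show "restr \<theta> U' \<in> Phi" unfolding Phi_def using U restr_restr openin_Int by blast
  qed
qed

lemma topo: "topo_model Tc Phi Vc"
  unfolding topo_model_def using nfs_Phi topspace_Tc Vc_def by auto

definition th1 :: "(('p::countable, 'i::countable) fm set set, 'i) nbf" where
  "th1 = restr th0 W"

lemma W_open: "openin Tc W"
  unfolding openin_Tc Topen_def by auto

lemma th1_Phi: "th1 \<in> Phi"
  unfolding Phi_def th1_def using W_open by blast

lemma dom_th1: "dom th1 = W"
  unfolding th1_def dom_restr by simp

lemma nb_th1: "x \<in> W \<Longrightarrow> nb th1 x i = cls i x"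
  unfolding th1_def using nb_restr[of x W i] by (auto simp: cls_def)

definition Gw :: "('p, 'i) fm set set \<Rightarrow> ('p, 'i) fm set" where "Gw w = \<Union>w"

lemma W_MCS': "w \<in> W \<Longrightarrow> MCS (Gw w)"
  unfolding Gw_def by (rule W_MCS)

lemma truth: "w \<in> W \<Longrightarrow> sat Tc Vc th1 w a = (a \<in> Gw w)"
proof (induction a arbitrary: w)
  case (Atom p) then show ?case by (simp add: Vc_def Gw_def)
next
  case (Neg a) then show ?case using mcs_neg[OF W_MCS'[OF Neg.prems], of a] by simp
next
  case (Conj a b) then show ?case using mcs_conj[OF W_MCS'[OF Conj.prems], of a b] by simp
next
  case (K i a)
  have "sat Tc Vc th1 w (K i a) = (\<forall>v\<in>cls i w. sat Tc Vc th1 v a)"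
    using nb_th1[OF K.prems] by simp
  also have "\<dots> = (\<forall>v\<in>cls i w. a \<in> Gw v)"
    using K.IH by (auto simp: cls_def)
  also have "\<dots> = (\<forall>D. MCS D \<and> Kset i D = Kset i (Gw w) \<longrightarrow> a \<in> D)"
  proof
    assume h: "\<forall>v\<in>cls i w. a \<in> Gw v"
    show "\<forall>D. MCS D \<and> Kset i D = Kset i (Gw w) \<longrightarrow> a \<in> D"
    proof (intro allI impI)
      fix D assume "MCS D \<and> Kset i D = Kset i (Gw w)"
      then have "{D} \<in> cls i w" using W_I Gw_def by (auto simp: cls_def Gw_def)
      then have "a \<in> Gw {D}" using h by blast
      then show "a \<in> D" by (simp add: Gw_def)
    qed
  next
    assume "\<forall>D. MCS D \<and> Kset i D = Kset i (Gw w) \<longrightarrow> a \<in> D"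
    then show "\<forall>v\<in>cls i w. a \<in> Gw v" using W_MCS' by (auto simp: cls_def Gw_def[symmetric])
  qed
  also have "\<dots> = (K i a \<in> Gw w)" using K_truth[OF W_MCS'[OF K.prems]] by simp
  finally show ?case .
next
  case (Intr a)
  have S: "{y \<in> dom th1. sat Tc Vc th1 y a} = {y \<in> W. a \<in> Gw y}"
    using Intr.IH dom_th1 by auto
  have "sat Tc Vc th1 w (Intr a) = (w \<in> Tc interior_of {y \<in> W. a \<in> Gw y})"
    using S by simp
  also have "\<dots> = (\<forall>v\<in>W. Rel w v \<longrightarrow> a \<in> Gw v)"
  proof
    assume "w \<in> Tc interior_of {y \<in> W. a \<in> Gw y}"
    then obtain U where U: "Topen U" "w \<in> U" "U \<subseteq> {y \<in> W. a \<in> Gw y}"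
      unfolding interior_of_def openin_Tc by blast
    then show "\<forall>v\<in>W. Rel w v \<longrightarrow> a \<in> Gw v" unfolding Topen_def by blast
  next
    assume h: "\<forall>v\<in>W. Rel w v \<longrightarrow> a \<in> Gw v"
    let ?U = "{v \<in> W. Rel w v}"
    have "Topen ?U" unfolding Topen_def Rel_def by auto
    moreover have "w \<in> ?U" using Intr.prems by (simp add: Rel_def)
    moreover have "?U \<subseteq> {y \<in> W. a \<in> Gw y}" using h by auto
    ultimately show "w \<in> Tc interior_of {y \<in> W. a \<in> Gw y}"
      unfolding interior_of_def openin_Tc by blast
  qed
  also have "\<dots> = (\<forall>D. MCS D \<and> Iset (Gw w) \<subseteq> Iset D \<longrightarrow> a \<in> D)"
  proof
    assume h: "\<forall>v\<in>W. Rel w v \<longrightarrow> a \<in> Gw v"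
    show "\<forall>D. MCS D \<and> Iset (Gw w) \<subseteq> Iset D \<longrightarrow> a \<in> D"
    proof (intro allI impI)
      fix D assume "MCS D \<and> Iset (Gw w) \<subseteq> Iset D"
      then have "{D} \<in> W" "Rel w {D}" using W_I Gw_def by (auto simp: Rel_def Gw_def)
      then have "a \<in> Gw {D}" using h by blast
      then show "a \<in> D" by (simp add: Gw_def)
    qed
  next
    assume "\<forall>D. MCS D \<and> Iset (Gw w) \<subseteq> Iset D \<longrightarrow> a \<in> D"
    then show "\<forall>v\<in>W. Rel w v \<longrightarrow> a \<in> Gw v" using W_MCS' by (auto simp: Rel_def Gw_def[symmetric])
  qed
  also have "\<dots> = (Intr a \<in> Gw w)" using I_truth[OF W_MCS'[OF Intr.prems]] by simp
  finally show ?case .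
qed

theorem theorem2:
  fixes \<phi> :: "('p :: countable, 'i :: finite) fm"
  assumes "\<forall>(T :: ('p, 'i) fm set set topology) \<Phi> V.
             topo_model T \<Phi> V \<longrightarrow> valid_in T \<Phi> V \<phi>"
  shows "derivable \<phi>"
proof (rule ccontr)
  assume n: "\<not> derivable \<phi>"
  have "consistent {Neg \<phi>}" unfolding consistent_def
  proof (intro allI impI notI)
    fix L assume L: "set L \<subseteq> {Neg \<phi>}" and d: "derivable (imps L bot)"
    have "derivable \<phi>"
    proof (rule taut1[OF d])
      fix g assume "peval g (imps L bot)"
      then show "peval g \<phi>" using L by (cases "peval g \<phi>") auto
    qed
    then show False using n by simp
  qed
  then obtain G where G: "{Neg \<phi>} \<subseteq> G" "MCS G" using lindenbaum by blast
  then have nG: "\<phi> \<notin> G" using mcs_neg[OF G(2)] by auto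
  have w: "{G} \<in> W" using W_I[OF G(2)] .
  have "valid_in Tc Phi Vc \<phi>" by (rule assms[rule_format, OF topo])
  moreover have "{G} \<in> dom (th1 :: (_, 'i) nbf)" unfolding dom_th1 by (rule w)
  ultimately have "sat Tc Vc th1 {G} \<phi>" unfolding valid_in_def using th1_Phi by blast
  then show False using truth[OF w] nG by (simp add: Gw_def)
qed

end
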